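(* If $c=c_1+\cdots+c_m$ is an $XY$-slope decomposition, then $c_1,\dots,c_m$ are linearly independent.
   Context: $V$ is a finite dimensional real vector space with a positive definite symmetric bilinear form $\langle\cdot,\cdot\rangle$; $\|\cdot\|_X$ is a norm with dual norm $\|v\|_Y=\max\{\langle v,w\rangle:\|w\|_X=1\}$. For nonzero $v$, $\mu_{XY}(v)=\|v\|_Y/\|v\|_X$. An expression $c=c_1+\cdots+c_m$ is an $XY$-slope decomposition if all $c_i$ are nonzero, $\langle c_i,c_j\rangle=\|c_i\|_X\|c_j\|_Y$ for all $i\le j$, and $\mu_{XY}(c_1)>\cdots>\mu_{XY}(c_m)$. *)

theory Defs
  imports "HOL-Analysis.Analysis"
begin

text \<open>V is modelled by a Euclidean space type; its inner product is the
positive definite symmetric bilinear form. nX is an arbitrary norm on V.\<close>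

definition is_norm :: "('a::real_vector \<Rightarrow> real) \<Rightarrow> bool" where
  "is_norm N \<longleftrightarrow>
     (\<forall>x. 0 \<le> N x) \<and> (\<forall>x. N x = 0 \<longleftrightarrow> x = 0) \<and>
     (\<forall>a x. N (a *\<^sub>R x) = \<bar>a\<bar> * N x) \<and>
     (\<forall>x y. N (x + y) \<le> N x + N y)"

text \<open>Dual norm: the maximum of inner v w over the X-unit sphere (the maximum
is attained, so the supremum equals it).\<close>
definition dual_norm :: "('a::real_inner \<Rightarrow> real) \<Rightarrow> 'a \<Rightarrow> real" where
  "dual_norm N v = (SUP w\<in>{w. N w = 1}. inner v w)"

definition slope :: "('a::real_inner \<Rightarrow> real) \<Rightarrow> 'a \<Rightarrow> real" where
  "slope N v = dual_norm N v / N v"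

definition slope_decomposition ::
  "('a::real_inner \<Rightarrow> real) \<Rightarrow> 'a \<Rightarrow> nat \<Rightarrow> (nat \<Rightarrow> 'a) \<Rightarrow> bool" where
  "slope_decomposition N c m cs \<longleftrightarrow>
     c = (\<Sum>i=1..m. cs i) \<and>
     (\<forall>i\<in>{1..m}. cs i \<noteq> 0) \<and>
     (\<forall>i\<in>{1..m}. \<forall>j\<in>{1..m}. i \<le> j \<longrightarrow> inner (cs i) (cs j) = N (cs i) * dual_norm N (cs j)) \<and>
     (\<forall>i\<in>{1..m}. \<forall>j\<in>{1..m}. i < j \<longrightarrow> slope N (cs i) > slope N (cs j))"

end

theory Submission
  imports Defs
begin

lemma key:
  fixes X Y :: "'a::real_inner \<Rightarrow> real" and cs :: "nat \<Rightarrow> 'a"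
  assumes nz: "\<forall>i\<in>{1..m}. cs i \<noteq> 0"
    and inn: "\<forall>i\<in>{1..m}. \<forall>j\<in>{1..m}. i \<le> j \<longrightarrow> inner (cs i) (cs j) = X (cs i) * Y (cs j)"
    and sl: "\<forall>i\<in>{1..m}. \<forall>j\<in>{1..m}. i < j \<longrightarrow> Y (cs i) / X (cs i) > Y (cs j) / X (cs j)"
    and xp: "\<forall>i\<in>{1..m}. X (cs i) > 0"
    and s0: "(\<Sum>i=1..m. a i *\<^sub>R cs i) = 0"
  shows "\<forall>i\<in>{1..m}. a i = 0"
  using assms
proof (induction m)
  case 0
  then show ?case by simp
next
  case (Suc m)
  let ?n = "Suc m"
  show ?case
  proof (cases "m = 0")
    case True
    then show ?thesis using Suc.prems by auto
  next
    case False
    define S where "S = (\<Sum>i=1..m. a i *\<^sub>R cs i)"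
    have eq: "S + a ?n *\<^sub>R cs ?n = 0" using Suc.prems(5) by (simp add: S_def)
    have Xn: "X (cs ?n) > 0" using Suc.prems(4) by simp
    have Xm: "X (cs m) > 0" using Suc.prems(4) False by simp
    have cnn: "inner (cs ?n) (cs ?n) = X (cs ?n) * Y (cs ?n)" using Suc.prems(2) by simp
    have "inner (cs ?n) (cs ?n) > 0" using Suc.prems(1) by simp
    hence Yn: "Y (cs ?n) > 0" using cnn Xn by (simp add: zero_less_mult_iff)
    have iSn: "inner S (cs ?n) = (\<Sum>i=1..m. a i * X (cs i)) * Y (cs ?n)"
      unfolding S_def inner_sum_left sum_distrib_right
      by (rule sum.cong) (use Suc.prems(2) in auto)
    have iSm: "inner S (cs m) = (\<Sum>i=1..m. a i * X (cs i)) * Y (cs m)"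
      unfolding S_def inner_sum_left sum_distrib_right
      by (rule sum.cong) (use Suc.prems(2) False in auto)
    have cmn: "inner (cs ?n) (cs m) = X (cs m) * Y (cs ?n)"
      proof -
      have "inner (cs m) (cs ?n) = X (cs m) * Y (cs ?n)" using Suc.prems(2) False by simp
      then show ?thesis by (simp add: inner_commute)
    qed
    define T where "T = (\<Sum>i=1..m. a i * X (cs i))"
    have e1: "inner (S + a ?n *\<^sub>R cs ?n) (cs ?n) = 0" using eq by simp
    hence "T * Y (cs ?n) + a ?n * (X (cs ?n) * Y (cs ?n)) = 0"
      using iSn cnn by (simp add: inner_add_left T_def)
    hence "(T + a ?n * X (cs ?n)) * Y (cs ?n) = 0" by (simp add: algebra_simps)
    hence T: "T = - a ?n * X (cs ?n)" using Yn by simp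
    have e2: "inner (S + a ?n *\<^sub>R cs ?n) (cs m) = 0" using eq by simp
    hence "T * Y (cs m) + a ?n * (X (cs m) * Y (cs ?n)) = 0"
      using iSm cmn by (simp add: inner_add_left T_def)
    hence z: "a ?n * (X (cs m) * Y (cs ?n) - X (cs ?n) * Y (cs m)) = 0"
      using T by (simp add: algebra_simps)
    have "Y (cs m) / X (cs m) > Y (cs ?n) / X (cs ?n)" using Suc.prems(3) False by simp
    hence "Y (cs m) * X (cs ?n) > Y (cs ?n) * X (cs m)" using Xn Xm
      by (simp add: divide_simps)
    hence an: "a ?n = 0" using z by (simp add: algebra_simps)
    hence "S = 0" using eq by simp
    hence "\<forall>i\<in>{1..m}. a i = 0"
      using Suc.IH Suc.prems(1-4) S_def by auto
    then show ?thesis using an by (auto simp: le_Suc_eq)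
  qed
qed

theorem mainTheorem13:
  fixes nX :: "'a::euclidean_space \<Rightarrow> real" and c :: 'a and m :: nat and cs :: "nat \<Rightarrow> 'a"
  assumes "is_norm nX"
    and "slope_decomposition nX c m cs"
  shows "inj_on cs {1..m} \<and> independent (cs ` {1..m})"
proof -
  have nz: "\<forall>i\<in>{1..m}. cs i \<noteq> 0"
    and inn: "\<forall>i\<in>{1..m}. \<forall>j\<in>{1..m}. i \<le> j \<longrightarrow> inner (cs i) (cs j) = nX (cs i) * dual_norm nX (cs j)"
    and sl: "\<forall>i\<in>{1..m}. \<forall>j\<in>{1..m}. i < j \<longrightarrow> dual_norm nX (cs i) / nX (cs i) > dual_norm nX (cs j) / nX (cs j)"
    using assms(2) unfolding slope_decomposition_def slope_def by auto
  have xp: "\<forall>i\<in>{1..m}. nX (cs i) > 0"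
    using nz assms(1) unfolding is_norm_def by (metis less_eq_real_def)
  have inj: "inj_on cs {1..m}"
  proof (rule inj_onI)
    fix i j assume "i \<in> {1..m}" "j \<in> {1..m}" "cs i = cs j"
    then show "i = j" using sl by (metis less_irrefl nat_neq_iff)
  qed
  have "independent (cs ` {1..m})"
  proof -
    have "\<forall>u. (\<Sum>v\<in>cs ` {1..m}. u v *\<^sub>R v) = 0 \<longrightarrow> (\<forall>v\<in>cs ` {1..m}. u v = 0)"
    proof (intro allI impI)
      fix u :: "'a \<Rightarrow> real"
      assume h: "(\<Sum>v\<in>cs ` {1..m}. u v *\<^sub>R v) = 0"
      have "(\<Sum>i=1..m. u (cs i) *\<^sub>R cs i) = 0"
        using h sum.reindex[OF inj, of "\<lambda>v. u v *\<^sub>R v"] by simp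
      then have "\<forall>i\<in>{1..m}. u (cs i) = 0"
        by (rule key[OF nz inn sl xp])
      then show "\<forall>v\<in>cs ` {1..m}. u v = 0" by auto
    qed
    then show ?thesis using dependent_finite[of "cs ` {1..m}"] by auto
  qed
  then show ?thesis using inj by simp
qed

end
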